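(* Let $\mathbf{S}\in\mathbb{R}^{d_v\times d_k}$ be a nonzero matrix with singular value decomposition $\mathbf{S}=\sum_{i=1}^{d}\sigma_i\mathbf{u}_i\mathbf{w}_i^\top$, $d=\min(d_k,d_v)$, $\sigma_1\ge\cdots\ge\sigma_d\ge0$ (so $\mathbf{w}_1\in\mathbb{R}^{d_k}$ is a unit right singular vector for the largest singular value $\sigma_1$). Let $\mathbf{q}^*\in\mathbb{R}^{d_k}$ (the pure query) and $\mathbf{n}\in\mathbb{R}^{d_k}$ (noise) be nonzero, let $\tilde{\mathbf{q}}=\mathbf{q}^*+\mathbf{n}$, $\mathbf{o}=\mathbf{S}\tilde{\mathbf{q}}$, $\mathbf{o}^*=\mathbf{S}\mathbf{q}^*$, and assume $\mathbf{o}^*\neq\mathbf{0}$. Define $\delta=|\mathbf{n}^\top\mathbf{w}_1|/\|\mathbf{n}\|_2$ and $\gamma=|\mathbf{q}^{*\top}\mathbf{w}_1|/\|\mathbf{q}^*\|_2$. Then $$\frac{\delta}{\sqrt{\operatorname{er}(\mathbf{S})}}\le\frac{\|\mathbf{o}-\mathbf{o}^*\|_2/\|\mathbf{o}^*\|_2}{\|\mathbf{n}\|_2/\|\mathbf{q}^*\|_2},$$ and, if $\gamma>0$, $$\frac{\|\mathbf{o}-\mathbf{o}^*\|_2/\|\mathbf{o}^*\|_2}{\|\mathbf{n}\|_2/\|\mathbf{q}^*\|_2}\le\frac{\sqrt{\operatorname{er}(\mathbf{S})}}{\gamma}.$$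
   Context: For a nonzero matrix $\mathbf{S}$ with singular values $\sigma_1\ge\sigma_2\ge\cdots\ge0$, the effective rank is $\operatorname{er}(\mathbf{S})=\|\mathbf{S}\|_F^2/\|\mathbf{S}\|_2^2=\sum_i\sigma_i^2/\sigma_1^2$. *)

theory Defs
  imports "HOL-Analysis.Analysis"
begin

text \<open>Matrices S in R^(d_v x d_k) are represented as real^'k^'v (rows indexed by 'v).\<close>

definition spec_norm :: "real^'k^'v \<Rightarrow> real" where
  "spec_norm S = onorm (\<lambda>x. S *v x)"

definition frob_norm_sq :: "real^'k^'v \<Rightarrow> real" where
  "frob_norm_sq S = (\<Sum>i\<in>UNIV. \<Sum>j\<in>UNIV. (S $ i $ j)^2)"

definition eff_rank :: "real^'k^'v \<Rightarrow> real" where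
  "eff_rank S = frob_norm_sq S / (spec_norm S)^2"

definition top_right_singular_vector :: "real^'k^'v \<Rightarrow> real^'k \<Rightarrow> bool" where
  "top_right_singular_vector S w \<longleftrightarrow>
     norm w = 1 \<and> (\<exists>u. norm u = 1 \<and> S *v w = spec_norm S *\<^sub>R u
                       \<and> transpose S *v u = spec_norm S *\<^sub>R w)"

end

theory Submission
  imports Defs
begin

lemma frob_nonneg: "0 \<le> frob_norm_sq (S :: real^'k^'v)"
  by (simp add: frob_norm_sq_def sum_nonneg)

lemma frob_bound:
  fixes S :: "real^'k^'v"
  shows "norm (S *v x) \<le> sqrt (frob_norm_sq S) * norm x"
proof -
  have "(norm (S *v x))^2 = (\<Sum>i\<in>UNIV. ((S *v x) $ i)^2)"
    by (simp add: norm_vec_def L2_set_def sum_nonneg)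
  also have "\<dots> \<le> (\<Sum>i\<in>UNIV. (norm (S $ i))^2 * (norm x)^2)"
  proof (rule sum_mono)
    fix i
    have "\<bar>(S *v x) $ i\<bar> \<le> norm (S $ i) * norm x"
      unfolding matrix_vector_mul_component by (rule Cauchy_Schwarz_ineq2)
    then show "((S *v x) $ i)^2 \<le> (norm (S $ i))^2 * (norm x)^2"
      by (metis abs_ge_zero power_mono power_mult_distrib power2_abs)
  qed
  also have "\<dots> = frob_norm_sq S * (norm x)^2"
    by (simp add: frob_norm_sq_def norm_vec_def L2_set_def sum_nonneg sum_distrib_right)
  finally have "(norm (S *v x))^2 \<le> (sqrt (frob_norm_sq S) * norm x)^2"
    by (simp add: power_mult_distrib frob_norm_sq_def sum_nonneg)
  then show ?thesis
    by (rule power2_le_imp_le) (simp add: frob_nonneg)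
qed

lemma lower_bound:
  fixes S :: "real^'k^'v"
  assumes "top_right_singular_vector S w"
  shows "spec_norm S * \<bar>x \<bullet> w\<bar> \<le> norm (S *v x)"
proof -
  obtain u where u: "norm u = 1" "transpose S *v u = spec_norm S *\<^sub>R w"
    using assms unfolding top_right_singular_vector_def by blast
  have "u \<bullet> (S *v x) = (u v* S) \<bullet> x" by (simp add: dot_lmul_matrix)
  also have "\<dots> = spec_norm S * (w \<bullet> x)"
    using u(2) by simp
  finally have e: "u \<bullet> (S *v x) = spec_norm S * (x \<bullet> w)" by (simp add: inner_commute)
  have "spec_norm S \<ge> 0" unfolding spec_norm_def by (simp add: onorm_pos_le)
  then have "spec_norm S * \<bar>x \<bullet> w\<bar> = \<bar>u \<bullet> (S *v x)\<bar>" by (simp add: e abs_mult)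
  also have "\<dots> \<le> norm u * norm (S *v x)" by (rule Cauchy_Schwarz_ineq2)
  finally show ?thesis using u(1) by simp
qed

lemma spec_pos:
  fixes S :: "real^'k^'v"
  assumes "S \<noteq> 0"
  shows "spec_norm S > 0"
proof -
  have "\<not> (\<forall>x. S *v x = 0)"
    using assms matrix_eq[of S 0] by simp
  then show ?thesis unfolding spec_norm_def
    by (simp add: onorm_pos_lt)
qed

theorem theorem2p4:
  fixes S :: "real^'k^'v" and w1 qs n :: "real^'k"
  assumes "S \<noteq> 0"
    and "top_right_singular_vector S w1"
    and "qs \<noteq> 0" and "n \<noteq> 0"
    and "S *v qs \<noteq> 0"
  shows "(\<bar>n \<bullet> w1\<bar> / norm n) / sqrt (eff_rank S)
           \<le> (norm (S *v (qs + n) - S *v qs) / norm (S *v qs)) / (norm n / norm qs)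
         \<and> (\<bar>qs \<bullet> w1\<bar> / norm qs > 0 \<longrightarrow>
           (norm (S *v (qs + n) - S *v qs) / norm (S *v qs)) / (norm n / norm qs)
           \<le> sqrt (eff_rank S) / (\<bar>qs \<bullet> w1\<bar> / norm qs))"
proof -
  define s where "s = spec_norm S"
  define r where "r = sqrt (frob_norm_sq S)"
  define a where "a = norm (S *v n)"
  define b where "b = norm (S *v qs)"
  define N where "N = norm n"
  define Q where "Q = norm qs"
  define dn where "dn = \<bar>n \<bullet> w1\<bar>"
  define dq where "dq = \<bar>qs \<bullet> w1\<bar>"
  have sp: "s > 0" using spec_pos[OF assms(1)] s_def by simp
  have Np: "N > 0" "Q > 0" "b > 0" using assms N_def Q_def b_def by auto
  have h1: "s * dn \<le> a" using lower_bound[OF assms(2)] s_def dn_def a_def by blast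
  have h2: "s * dq \<le> b" using lower_bound[OF assms(2)] s_def dq_def b_def by blast
  have h3: "a \<le> r * N" using frob_bound a_def r_def N_def by blast
  have h4: "b \<le> r * Q" using frob_bound b_def r_def Q_def by blast
  have r0: "r \<ge> 0" by (simp add: r_def frob_nonneg)
  have "r \<noteq> 0" using h4 Np by auto
  then have rp: "r > 0" using r0 by linarith
  have er: "sqrt (eff_rank S) = r / s"
    using sp unfolding eff_rank_def r_def s_def by (simp add: real_sqrt_divide)
  have diff: "S *v (qs + n) - S *v qs = S *v n" by (simp add: matrix_vector_right_distrib)
  have dnn: "dn \<ge> 0" "dq \<ge> 0" "a \<ge> 0" using dn_def dq_def a_def by auto
  have g1: "(dn / N) / (r / s) \<le> (a / b) / (N / Q)"
  proof -
    have "(dn / N) / (r / s) = (s * dn) / (N * r)" using sp Np rp by (simp add: field_simps)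
    also have "\<dots> \<le> a / (N * r)" using h1 Np rp by (simp add: divide_right_mono)
    also have "\<dots> \<le> a / (N * (b / Q))"
      using Np rp h4 dnn by (intro divide_left_mono) (auto simp: field_simps)
    also have "\<dots> = (a / b) / (N / Q)" using Np by (simp add: field_simps)
    finally show ?thesis .
  qed
  have g2: "dq / Q > 0 \<Longrightarrow> (a / b) / (N / Q) \<le> (r / s) / (dq / Q)"
  proof -
    assume "dq / Q > 0"
    then have dqp: "dq > 0" using Np by (simp add: zero_less_divide_iff)
    have "(a / b) / (N / Q) = (a * Q) / (b * N)" using Np by (simp add: field_simps)
    also have "\<dots> \<le> (r * N * Q) / (b * N)"
      using h3 Np by (intro divide_right_mono mult_right_mono) auto
    also have "\<dots> = r * Q / b" using Np by simp
    also have "\<dots> \<le> r * Q / (s * dq)"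
      using h2 sp dqp rp Np by (intro divide_left_mono) auto
    also have "\<dots> = (r / s) / (dq / Q)" using sp dqp Np by (simp add: field_simps)
    finally show ?thesis .
  qed
  show ?thesis unfolding er diff a_def[symmetric] b_def[symmetric] N_def[symmetric]
      Q_def[symmetric] dn_def[symmetric] dq_def[symmetric]
    using g1 g2 by (intro conjI impI)
qed

end
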